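(* For every $M\geq 1$, $$g_1(M)=\sum_{k\geq 0}(k+1)\binom{M-k-1}{k+1},$$ where binomial coefficients $\binom{a}{b}$ with $b>a$ are zero.
   Context: The perimeter of a nonempty partition $\lambda$ with largest part $\lambda_1$ and $\ell(\lambda)$ parts is $\lambda_1+\ell(\lambda)-1$. $g_1(M)$ is the number of partitions with perimeter $M$ in which exactly one distinct even integer occurs as a part (possibly with multiplicity greater than one) and all other parts are odd. *)

theory Defs
  imports Main "HOL-Library.Multiset"
begin

definition is_partition :: "nat multiset \<Rightarrow> bool" where
  "is_partition p \<longleftrightarrow> (\<forall>x\<in>#p. 0 < x)"

definition perimeter :: "nat multiset \<Rightarrow> nat" where
  "perimeter p = Max (set_mset p) + size p - 1"

definition g1 :: "nat \<Rightarrow> nat" where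
  "g1 M = card {p. is_partition p \<and> p \<noteq> {#} \<and> perimeter p = M
                  \<and> card {x \<in> set_mset p. even x} = 1}"

end

theory Submission imports Defs begin

lemma subR: "finite R \<Longrightarrow> R \<subseteq> set_mset p \<Longrightarrow> mset_set R \<subseteq># p"
proof (unfold subseteq_mset_def, intro allI)
  fix a assume "finite R" "R \<subseteq> set_mset p"
  thus "count (mset_set R) a \<le> count p a"
    by (cases "a \<in> R") (auto simp: count_mset_set' Suc_le_eq)
qed


lemma card_req:
  fixes V R :: "'a set"
  assumes "finite V" "R \<subseteq> V"
  shows "card {p. set_mset p \<subseteq> V \<and> R \<subseteq> set_mset p \<and> size p = card R + n} = (card V + n - 1) choose n"
proof -
  have fR: "finite R" using assms finite_subset by blast
  let ?S = "{p. set_mset p \<subseteq> V \<and> R \<subseteq> set_mset p \<and> size p = card R + n}"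
  have "bij_betw (\<lambda>q. q + mset_set R) (multisets_of_size V n) ?S"
  proof (rule bij_betw_byWitness[where f' = "\<lambda>p. p - mset_set R"])
    show "\<forall>a\<in>multisets_of_size V n. a + mset_set R - mset_set R = a" by simp
    show "\<forall>p\<in>?S. p - mset_set R + mset_set R = p"
    proof
      fix p assume p: "p \<in> ?S"
      have "mset_set R \<subseteq># p"
        using p fR by (intro subR) auto
      thus "p - mset_set R + mset_set R = p" by simp
    qed
    show "(\<lambda>q. q + mset_set R) ` multisets_of_size V n \<subseteq> ?S"
    proof
      fix x assume "x \<in> (\<lambda>q. q + mset_set R) ` multisets_of_size V n"
      then obtain q where q: "q \<in> multisets_of_size V n" and x: "x = q + mset_set R" by blast
      have "size x = card R + n" using q x fR by (simp add: multisets_of_size_def)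
      moreover have "set_mset x \<subseteq> V" using q x fR assms(2) by (auto simp: multisets_of_size_def)
      moreover have "R \<subseteq> set_mset x" using x fR by auto
      ultimately show "x \<in> ?S" by blast
    qed
    show "(\<lambda>p. p - mset_set R) ` ?S \<subseteq> multisets_of_size V n"
    proof
      fix q assume "q \<in> (\<lambda>p. p - mset_set R) ` ?S"
      then obtain p where p: "p \<in> ?S" and q: "q = p - mset_set R" by blast
      have sub: "mset_set R \<subseteq># p"
        using p fR by (intro subR) auto
      have "size q = n" using p q size_Diff_submset[OF sub] fR by simp
      moreover have "set_mset q \<subseteq> V" using p q by (auto dest: in_diffD)
      ultimately show "q \<in> multisets_of_size V n" by (simp add: multisets_of_size_def)
    qed
  qed
  hence "card ?S = card (multisets_of_size V n)" by (rule bij_betw_same_card[symmetric])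
  thus ?thesis using card_multisets_of_size[OF assms(1), of n] by (simp only:)
qed

definition odu :: "nat \<Rightarrow> nat set" where "odu b = (\<lambda>i. 2*i+1) ` {..<b}"

lemma odu_iff: "x \<in> odu b \<longleftrightarrow> odd x \<and> x < 2*b"
  unfolding odu_def by (auto elim!: oddE)

lemma card_odu: "card (odu b) = b"
  unfolding odu_def by (subst card_image) (auto simp: inj_on_def)

lemma fin_odu: "finite (odu b)" unfolding odu_def by simp

definition EE :: "nat \<Rightarrow> nat \<Rightarrow> nat multiset set" where
  "EE M b = {p. set_mset p \<subseteq> insert (2*b) (odu b) \<and> 2*b \<in># p \<and> 2*b + size p = M + 1}"

definition OD :: "nat \<Rightarrow> nat \<Rightarrow> nat \<Rightarrow> nat multiset set" where
  "OD M a b = {p. set_mset p \<subseteq> insert (2*b) (odu (Suc a)) \<and> 2*b \<in># p \<and> 2*a+1 \<in># p \<and> 2*a + size p = M}"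

lemma card_EE: "card (EE M b) = (M-b) choose b"
proof (cases "2*b \<le> M")
  case True
  let ?V = "insert (2*b) (odu b)"
  have "EE M b = {p. set_mset p \<subseteq> ?V \<and> {2*b} \<subseteq> set_mset p \<and> size p = card {2*b} + (M - 2*b)}"
    unfolding EE_def using True by auto
  also have "card \<dots> = (card ?V + (M - 2*b) - 1) choose (M - 2*b)"
    by (rule card_req) (auto simp: fin_odu)
  also have "card ?V = b + 1" using card_odu[of b] fin_odu[of b] by (simp add: odu_iff)
  also have "(b + 1 + (M - 2*b) - 1) choose (M - 2*b) = (M - b) choose (M - 2*b)"
    using True by (simp add: algebra_simps)
  also have "\<dots> = (M - b) choose b"
  proof -
    have "b \<le> M - b" using True by simp
    from binomial_symmetric[OF this] have "(M-b) choose b = (M-b) choose (M-b-b)" .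
    moreover have "M-b-b = M-2*b" by simp
    ultimately show ?thesis by simp
  qed
  finally show ?thesis .
next
  case False
  have "EE M b = {}"
  proof (rule ccontr)
    assume "EE M b \<noteq> {}"
    then obtain p where "p \<in> EE M b" by blast
    hence "2*b \<in># p" "2*b + size p = M + 1" by (auto simp: EE_def)
    hence "size p \<ge> 1" by (cases p) auto
    thus False using False \<open>2*b + size p = M + 1\<close> by simp
  qed
  thus ?thesis using False by simp
qed

lemma card_OD: assumes "b \<le> a" shows "card (OD M a b) = (M-a-1) choose (a+1)"
proof (cases "2*a+2 \<le> M")
  case True
  let ?V = "insert (2*b) (odu (Suc a))"
  have ne: "2*b \<noteq> 2*a+1" by presburger
  have c2: "card {2*b, 2*a+1} = 2" using ne by simp
  have "OD M a b = {p. set_mset p \<subseteq> ?V \<and> {2*b, 2*a+1} \<subseteq> set_mset p \<and> size p = card {2*b, 2*a+1} + (M - 2*a - 2)}"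
    unfolding OD_def using True c2 by auto
  also have "card \<dots> = (card ?V + (M - 2*a - 2) - 1) choose (M - 2*a - 2)"
    by (rule card_req) (auto simp: fin_odu odu_iff)
  also have "card ?V = a + 2" using card_odu[of "Suc a"] fin_odu[of "Suc a"] by (simp add: odu_iff)
  also have "(a + 2 + (M - 2*a - 2) - 1) choose (M - 2*a - 2) = (M - a - 1) choose (M - 2*a - 2)"
  proof -
    have "a + 2 + (M - 2*a - 2) - 1 = M - a - 1" using True by simp
    thus ?thesis by (simp only:)
  qed
  also have "\<dots> = (M - a - 1) choose (a+1)"
  proof -
    have "a+1 \<le> M - a - 1" using True by simp
    from binomial_symmetric[OF this] have "(M-a-1) choose (a+1) = (M-a-1) choose (M-a-1-(a+1))" .
    moreover have "M-a-1-(a+1) = M-2*a-2" by simp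
    ultimately show ?thesis by simp
  qed
  finally show ?thesis .
next
  case False
  have "OD M a b = {}"
  proof (rule ccontr)
    assume "OD M a b \<noteq> {}"
    then obtain p where "p \<in> OD M a b" by blast
    hence h: "2*b \<in># p" "2*a+1 \<in># p" "2*a + size p = M" by (auto simp: OD_def)
    have "{2*b, 2*a+1} \<subseteq> set_mset p" using h by auto
    hence "mset_set {2*b, 2*a+1} \<subseteq># p" by (intro subR) auto
    hence "size (mset_set {2*b, 2*a+1}) \<le> size p" by (rule size_mset_mono)
    moreover have "2*b \<noteq> 2*a+1" by presburger
    ultimately have "size p \<ge> 2" by simp
    thus False using False h(3) by simp
  qed
  thus ?thesis using False by simp
qed


lemma EE_in: assumes "b \<ge> 1" "p \<in> EE M b"
  shows "is_partition p \<and> p \<noteq> {#} \<and> perimeter p = M \<and> card {x \<in> set_mset p. even x} = 1"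
proof -
  have s: "set_mset p \<subseteq> insert (2*b) (odu b)" and e: "2*b \<in># p" and sz: "2*b + size p = M + 1"
    using assms by (auto simp: EE_def)
  have le: "\<forall>x\<in>set_mset p. x \<le> 2*b" using s by (auto simp: odu_iff)
  have mx: "Max (set_mset p) = 2*b" by (rule Max_eqI) (use le e in auto)
  have ev: "{x \<in> set_mset p. even x} = {2*b}" using s e by (auto simp: odu_iff)
  have "is_partition p" unfolding is_partition_def
  proof
    fix x assume "x \<in># p" hence "x \<in> insert (2*b) (odu b)" using s by blast
    thus "0 < x" using assms(1) by (auto simp: odu_iff intro: odd_pos)
  qed
  moreover have "p \<noteq> {#}" using e by auto
  moreover have "perimeter p = M" unfolding perimeter_def mx using sz by simp
  ultimately show ?thesis using ev by simp
qed

lemma OD_in: assumes "b \<ge> 1" "b \<le> a" "p \<in> OD M a b"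
  shows "is_partition p \<and> p \<noteq> {#} \<and> perimeter p = M \<and> card {x \<in> set_mset p. even x} = 1"
proof -
  have s: "set_mset p \<subseteq> insert (2*b) (odu (Suc a))" and e: "2*b \<in># p" and o: "2*a+1 \<in># p"
    and sz: "2*a + size p = M"
    using assms by (auto simp: OD_def)
  have le: "\<forall>x\<in>set_mset p. x \<le> 2*a+1" using s assms(2) by (auto simp: odu_iff)
  have mx: "Max (set_mset p) = 2*a+1" by (rule Max_eqI) (use le o in auto)
  have ev: "{x \<in> set_mset p. even x} = {2*b}" using s e by (auto simp: odu_iff)
  have "is_partition p" unfolding is_partition_def
  proof
    fix x assume "x \<in># p" hence "x \<in> insert (2*b) (odu (Suc a))" using s by blast
    thus "0 < x" using assms(1) by (auto simp: odu_iff intro: odd_pos)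
  qed
  moreover have "p \<noteq> {#}" using e by auto
  moreover have "perimeter p = M" unfolding perimeter_def mx using sz by simp
  ultimately show ?thesis using ev by simp
qed

lemma decomp:
  "{p. is_partition p \<and> p \<noteq> {#} \<and> perimeter p = M \<and> card {x \<in> set_mset p. even x} = 1}
   = (\<Union>b\<in>{1..M}. EE M b) \<union> (\<Union>(a,b)\<in>(SIGMA a:{1..M}. {1..a}). OD M a b)"
  (is "?S = ?U")
proof
  show "?U \<subseteq> ?S" using EE_in OD_in by fastforce
  show "?S \<subseteq> ?U"
  proof
    fix p assume "p \<in> ?S"
    hence ip: "is_partition p" and ne: "p \<noteq> {#}" and pm: "perimeter p = M"
      and c1: "card {x \<in> set_mset p. even x} = 1" by auto
    obtain e where E: "{x \<in> set_mset p. even x} = {e}" using c1 by (rule card_1_singletonE)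
    have ep: "e \<in># p" and ee: "even e" using E by auto
    have epos: "e > 0" using ip ep by (auto simp: is_partition_def)
    obtain b where b: "e = 2*b" using ee by blast
    have b1: "b \<ge> 1" using epos b by simp
    define L where "L = Max (set_mset p)"
    have fin: "finite (set_mset p)" by simp
    have nes: "set_mset p \<noteq> {}" using ne by simp
    have Lin: "L \<in># p" unfolding L_def using Max_in[OF fin nes] by simp
    have Lge: "\<forall>x\<in>#p. x \<le> L" unfolding L_def using fin by auto
    have szp: "size p \<ge> 1" using ne by (cases p) auto
    have LM: "L + size p - 1 = M" using pm unfolding perimeter_def L_def by simp
    have evx: "\<And>x. x \<in># p \<Longrightarrow> even x \<Longrightarrow> x = 2*b" using E b by auto
    show "p \<in> ?U"
    proof (cases "even L")
      case True
      hence Le: "L = 2*b" using evx Lin by simp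
      have "set_mset p \<subseteq> insert (2*b) (odu b)"
      proof
        fix x assume x: "x \<in># p"
        show "x \<in> insert (2*b) (odu b)"
        proof (cases "even x")
          case True thus ?thesis using evx x by simp
        next
          case False
          hence "x \<noteq> L" using \<open>even L\<close> by auto
          hence "x < 2*b" using Lge x Le by fastforce
          thus ?thesis using False by (simp add: odu_iff)
        qed
      qed
      hence "p \<in> EE M b" unfolding EE_def using ep b LM Le szp by auto
      moreover have "b \<in> {1..M}" using b1 LM Le szp by auto
      ultimately show ?thesis by blast
    next
      case False
      then obtain a where a: "L = 2*a+1" by (blast elim: oddE)
      have "e \<le> L" using Lge ep by simp
      hence ba: "b \<le> a" using a b by presburger
      have "set_mset p \<subseteq> insert (2*b) (odu (Suc a))"
      proof
        fix x assume x: "x \<in># p"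
        show "x \<in> insert (2*b) (odu (Suc a))"
        proof (cases "even x")
          case True thus ?thesis using evx x by simp
        next
          case False
          hence "x < 2 * Suc a" using Lge x a by fastforce
          thus ?thesis using False by (simp add: odu_iff)
        qed
      qed
      hence "p \<in> OD M a b" unfolding OD_def using ep b LM a Lin szp by auto
      moreover have "(a,b) \<in> (SIGMA a:{1..M}. {1..a})" using b1 ba LM a szp by auto
      ultimately show ?thesis by blast
    qed
  qed
qed


lemma fin_EE: "finite (EE M b)"
proof -
  have "EE M b \<subseteq> multisets_of_size (insert (2*b) (odu b)) (M + 1 - 2*b)"
    unfolding EE_def multisets_of_size_def by auto
  thus ?thesis by (rule finite_subset) (auto simp: fin_odu)
qed

lemma fin_OD: "finite (OD M a b)"
proof -
  have "OD M a b \<subseteq> multisets_of_size (insert (2*b) (odu (Suc a))) (M - 2*a)"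
    unfolding OD_def multisets_of_size_def by auto
  thus ?thesis by (rule finite_subset) (auto simp: fin_odu)
qed

lemma shift1: "(\<Sum>k<n. f (Suc k)) = (\<Sum>b=1..n. (f b :: nat))"
  by (induction n) (auto simp: atLeastAtMostSuc_conv)

lemma shift2: "(\<Sum>k<Suc n. g k) = g 0 + (\<Sum>a=1..n. (g a :: nat))"
  by (induction n) (auto simp: atLeastAtMostSuc_conv)

theorem mainTheorem10:
  fixes M :: nat
  assumes "M \<ge> 1"
  shows "g1 M = (\<Sum>k<M. (k + 1) * ((M - k - 1) choose (k + 1)))"
proof -
  let ?I = "SIGMA a:{1..M}. {1..a}"
  have d1: "\<forall>i\<in>{1..M}. \<forall>j\<in>{1..M}. i \<noteq> j \<longrightarrow> EE M i \<inter> EE M j = {}"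
  proof (intro ballI impI)
    fix i j :: nat assume "i \<noteq> j"
    show "EE M i \<inter> EE M j = {}"
    proof (rule ccontr)
      assume "EE M i \<inter> EE M j \<noteq> {}"
      then obtain p where "p \<in> EE M i" "p \<in> EE M j" by blast
      hence "2*i \<in> insert (2*j) (odu j)" unfolding EE_def by auto
      thus False using \<open>i \<noteq> j\<close> by (auto simp: odu_iff)
    qed
  qed
  have d2: "\<forall>i\<in>?I. \<forall>j\<in>?I. i \<noteq> j \<longrightarrow> (case i of (a,b) \<Rightarrow> OD M a b) \<inter> (case j of (a,b) \<Rightarrow> OD M a b) = {}"
  proof (intro ballI impI)
    fix i j :: "nat \<times> nat" assume "i \<in> ?I" "j \<in> ?I" "i \<noteq> j"
    obtain a b where i: "i = (a,b)" by fastforce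
    obtain a' b' where j: "j = (a',b')" by fastforce
    show "(case i of (a,b) \<Rightarrow> OD M a b) \<inter> (case j of (a,b) \<Rightarrow> OD M a b) = {}"
    proof (rule ccontr)
      assume "(case i of (a,b) \<Rightarrow> OD M a b) \<inter> (case j of (a,b) \<Rightarrow> OD M a b) \<noteq> {}"
      then obtain p where "p \<in> OD M a b" "p \<in> OD M a' b'" using i j by auto
      hence h: "2*a+1 \<in> insert (2*b') (odu (Suc a'))" "2*a'+1 \<in> insert (2*b) (odu (Suc a))"
        "2*b \<in> insert (2*b') (odu (Suc a'))"
        unfolding OD_def by auto
      have "a = a'" using h(1,2) by (auto simp: odu_iff) presburger+
      moreover have "b = b'" using h(3) by (auto simp: odu_iff)
      ultimately show False using \<open>i \<noteq> j\<close> i j by simp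
    qed
  qed
  have d3: "(\<Union>b\<in>{1..M}. EE M b) \<inter> (\<Union>(a,b)\<in>?I. OD M a b) = {}"
  proof (rule ccontr)
    assume "(\<Union>b\<in>{1..M}. EE M b) \<inter> (\<Union>(a,b)\<in>?I. OD M a b) \<noteq> {}"
    then obtain p b' a b where p: "p \<in> EE M b'" "p \<in> OD M a b" "(a,b) \<in> ?I" by blast
    hence h: "2*a+1 \<in> insert (2*b') (odu b')" "2*b' \<in> insert (2*b) (odu (Suc a))" "b \<le> a"
      unfolding EE_def OD_def by auto
    from h(1) have "a < b'" by (auto simp: odu_iff)
    moreover from h(2) have "b' = b" by (auto simp: odu_iff)
    ultimately show False using h(3) by simp
  qed
  have "g1 M = card ((\<Union>b\<in>{1..M}. EE M b) \<union> (\<Union>(a,b)\<in>?I. OD M a b))"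
    unfolding g1_def decomp ..
  also have "\<dots> = card (\<Union>b\<in>{1..M}. EE M b) + card (\<Union>(a,b)\<in>?I. OD M a b)"
    by (rule card_Un_disjoint) (use d3 fin_EE fin_OD in auto)
  also have "card (\<Union>b\<in>{1..M}. EE M b) = (\<Sum>b\<in>{1..M}. card (EE M b))"
    by (rule card_UN_disjoint) (use d1 fin_EE in auto)
  also have "card (\<Union>(a,b)\<in>?I. OD M a b) = (\<Sum>i\<in>?I. card (case i of (a,b) \<Rightarrow> OD M a b))"
    by (rule card_UN_disjoint) (use d2 fin_OD in auto)
  also have "\<dots> = (\<Sum>a\<in>{1..M}. \<Sum>b\<in>{1..a}. card (OD M a b))"
    by (subst sum.Sigma) (auto intro!: sum.cong split: prod.splits)
  also have "\<dots> = (\<Sum>a\<in>{1..M}. a * ((M-a-1) choose (a+1)))"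
    by (rule sum.cong) (auto simp: card_OD)
  also have "(\<Sum>b\<in>{1..M}. card (EE M b)) = (\<Sum>b\<in>{1..M}. (M-b) choose b)"
    by (simp add: card_EE)
  also have "(\<Sum>b\<in>{1..M}. (M-b) choose b) = (\<Sum>k<M. (M-k-1) choose (k+1))"
    using shift1[of "\<lambda>b. (M-b) choose b" M] by simp
  also have "(\<Sum>a\<in>{1..M}. a * ((M-a-1) choose (a+1))) = (\<Sum>k<M. k * ((M-k-1) choose (k+1)))"
  proof -
    have "(\<Sum>k<Suc M. k * ((M-k-1) choose (k+1))) = (\<Sum>a\<in>{1..M}. a * ((M-a-1) choose (a+1)))"
      using shift2[of "\<lambda>k. k * ((M-k-1) choose (k+1))" M] by simp
    moreover have "(\<Sum>k<Suc M. k * ((M-k-1) choose (k+1))) = (\<Sum>k<M. k * ((M-k-1) choose (k+1)))"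
      by simp
    ultimately show ?thesis by simp
  qed
  also have "(\<Sum>k<M. (M-k-1) choose (k+1)) + (\<Sum>k<M. k * ((M-k-1) choose (k+1)))
      = (\<Sum>k<M. (k + 1) * ((M - k - 1) choose (k + 1)))"
    by (simp add: sum.distrib[symmetric] algebra_simps)
  finally show ?thesis .
qed

end
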